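(* Let $\Gamma$ be a non-boring strongly regular graph with parameters $\mathrm{srg}(n,k,1,\mu)$. Then $C_3(\Gamma)$ is strongly regular if and only if $\Gamma$ is the (unique up to isomorphism) strongly regular graph with parameters $(9,4,1,2)$, $(15,6,1,3)$, or $(27,10,1,5)$.
   Context: $\mathrm{srg}(n,k,\lambda,\mu)$: a graph with $n$ vertices, $k$-regular, in which adjacent vertices have exactly $\lambda$ common neighbours and distinct non-adjacent vertices have exactly $\mu$ common neighbours; a graph is strongly regular if it is an srg for some parameters (equivalently, a regular graph with at most three distinct adjacency eigenvalues). An srg is boring if it has at most two distinct eigenvalues (disjoint union of equal complete graphs or the complement of one), non-boring otherwise. When $\lambda=1$ every edge lies in exactly one triangle. $C_3(\Gamma)$ is the graph whose vertices are the triangles of $\Gamma$, two distinct triangles adjacent iff they share a vertex. *)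

theory Defs
  imports "HOL-Analysis.Analysis"
begin

definition simple_graph :: "'a set \<Rightarrow> ('a \<Rightarrow> 'a \<Rightarrow> bool) \<Rightarrow> bool" where
  "simple_graph V E \<longleftrightarrow> finite V \<and> (\<forall>u\<in>V. \<forall>v\<in>V. E u v \<longleftrightarrow> E v u) \<and> (\<forall>v\<in>V. \<not> E v v)"

definition nbhd :: "'a set \<Rightarrow> ('a \<Rightarrow> 'a \<Rightarrow> bool) \<Rightarrow> 'a \<Rightarrow> 'a set" where
  "nbhd V E v = {w \<in> V. E v w}"

definition srg :: "'a set \<Rightarrow> ('a \<Rightarrow> 'a \<Rightarrow> bool) \<Rightarrow> nat \<Rightarrow> nat \<Rightarrow> nat \<Rightarrow> nat \<Rightarrow> bool" where
  "srg V E n k l m \<longleftrightarrow> simple_graph V E \<and> card V = n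
     \<and> (\<forall>v\<in>V. card (nbhd V E v) = k)
     \<and> (\<forall>u\<in>V. \<forall>v\<in>V. E u v \<longrightarrow> card (nbhd V E u \<inter> nbhd V E v) = l)
     \<and> (\<forall>u\<in>V. \<forall>v\<in>V. u \<noteq> v \<longrightarrow> \<not> E u v \<longrightarrow> card (nbhd V E u \<inter> nbhd V E v) = m)"

definition strongly_regular :: "'a set \<Rightarrow> ('a \<Rightarrow> 'a \<Rightarrow> bool) \<Rightarrow> bool" where
  "strongly_regular V E \<longleftrightarrow> (\<exists>n k l m. srg V E n k l m)"

definition adj_matrix :: "('a::finite \<Rightarrow> 'a \<Rightarrow> bool) \<Rightarrow> real^'a^'a" where
  "adj_matrix E = (\<chi> i j. if E i j then 1 else 0)"

definition adj_eigenvalues :: "('a::finite \<Rightarrow> 'a \<Rightarrow> bool) \<Rightarrow> real set" where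
  "adj_eigenvalues E = {c. \<exists>x. x \<noteq> 0 \<and> adj_matrix E *v x = c *\<^sub>R x}"

text \<open>Boring: at most two distinct adjacency eigenvalues (the adjacency matrix of a simple
  graph is real symmetric, so all its eigenvalues are real).\<close>
definition boring :: "('a::finite \<Rightarrow> 'a \<Rightarrow> bool) \<Rightarrow> bool" where
  "boring E \<longleftrightarrow> card (adj_eigenvalues E) \<le> 2"

definition triangles :: "'a set \<Rightarrow> ('a \<Rightarrow> 'a \<Rightarrow> bool) \<Rightarrow> 'a set set" where
  "triangles V E = {{a, b, c} | a b c. a \<in> V \<and> b \<in> V \<and> c \<in> V \<and> E a b \<and> E b c \<and> E a c}"

definition C3_adj :: "'a set \<Rightarrow> 'a set \<Rightarrow> bool" where
  "C3_adj S T \<longleftrightarrow> S \<noteq> T \<and> S \<inter> T \<noteq> {}"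

end

theory Submission
  imports Defs "Jordan_Normal_Form.Schur_Decomposition"
begin

lemma card_filter_sum: "finite A \<Longrightarrow> card {x\<in>A. P x} = (\<Sum>x\<in>A. if P x then 1 else 0)"
  by (simp add: sum.inter_filter[symmetric])

lemma card3_filter:
  assumes "x \<noteq> y" "x \<noteq> z" "y \<noteq> z"
  shows "card {b\<in>{x,y,z}. P b} = of_bool (P x) + of_bool (P y) + of_bool (P z)"
proof -
  have "card {b\<in>{x,y,z}. P b} = (\<Sum>b\<in>{x,y,z}. if P b then 1 else 0)"
    by (rule card_filter_sum) simp
  also have "\<dots> = of_bool (P x) + of_bool (P y) + of_bool (P z)" using assms by simp
  finally show ?thesis .
qed

locale srg1 =
  fixes E :: "'a::finite \<Rightarrow> 'a \<Rightarrow> bool" and n k \<mu> :: nat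
  assumes srg: "srg UNIV E n k 1 \<mu>"
begin

definition N where "N v = {w. E v w}"

lemma symE: "E u v = E v u" using srg unfolding srg_def simple_graph_def by auto
lemma irr: "\<not> E v v" using srg unfolding srg_def simple_graph_def by auto
lemma nbhd_eq: "nbhd UNIV E v = N v" by (simp add: nbhd_def N_def)
lemma cardN: "card (N v) = k" using srg unfolding srg_def by (auto simp: nbhd_eq)
lemma lam: "E u v \<Longrightarrow> card (N u \<inter> N v) = 1" using srg unfolding srg_def by (auto simp: nbhd_eq)
lemma mu: "u \<noteq> v \<Longrightarrow> \<not> E u v \<Longrightarrow> card (N u \<inter> N v) = \<mu>"
  using srg unfolding srg_def by (auto simp: nbhd_eq)
lemma cardU: "card (UNIV::'a set) = n" using srg unfolding srg_def by auto

lemma ex1: assumes "E u v" shows "\<exists>!w. E u w \<and> E v w"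
proof -
  from lam[OF assms] obtain w where "N u \<inter> N v = {w}" by (meson card_1_singletonE)
  then have "\<forall>x. (E u x \<and> E v x) \<longleftrightarrow> x = w" by (auto simp: N_def set_eq_iff)
  then show ?thesis by (intro ex1I[of _ w]) auto
qed

definition pp where "pp u v = (THE w. E u w \<and> E v w)"
lemma pp: "E u v \<Longrightarrow> E u (pp u v) \<and> E v (pp u v)"
  unfolding pp_def by (rule theI', rule ex1)
lemma pp_uniq: "E u v \<Longrightarrow> E u w \<Longrightarrow> E v w \<Longrightarrow> pp u v = w"
  unfolding pp_def by (rule the1_equality, rule ex1, auto)
lemma pp_sym: "E u v \<Longrightarrow> pp v u = pp u v"
  by (metis pp pp_uniq symE)
lemma pp_inv: "E u v \<Longrightarrow> pp u (pp u v) = v"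
  by (metis pp pp_uniq symE)
lemma pp_ne: "E u v \<Longrightarrow> pp u v \<noteq> u \<and> pp u v \<noteq> v"
  by (metis pp irr)

abbreviation "T \<equiv> triangles UNIV E"

lemma T_mem: "s \<in> T \<longleftrightarrow> (\<exists>a b c. s = {a,b,c} \<and> E a b \<and> E b c \<and> E a c)"
  by (auto simp: triangles_def)

lemma tri_edge: "E a b \<Longrightarrow> {a,b,pp a b} \<in> T"
  unfolding T_mem using pp by blast

lemma tri_adj: "s \<in> T \<Longrightarrow> a \<in> s \<Longrightarrow> b \<in> s \<Longrightarrow> a \<noteq> b \<Longrightarrow> E a b"
  unfolding T_mem using symE by auto

lemma tri_third: "s \<in> T \<Longrightarrow> a \<in> s \<Longrightarrow> b \<in> s \<Longrightarrow> \<exists>c\<in>s. c \<noteq> a \<and> c \<noteq> b"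
  unfolding T_mem using irr by auto

lemma tri_eq: assumes "s \<in> T" "a \<in> s" "b \<in> s" "a \<noteq> b" shows "s = {a, b, pp a b}"
proof -
  have ab: "E a b" using tri_adj assms by blast
  have 1: "c = pp a b" if "c \<in> s" "c \<noteq> a" "c \<noteq> b" for c
    using pp_uniq[OF ab] tri_adj[OF assms(1)] that assms by metis
  obtain c where "c \<in> s" "c \<noteq> a" "c \<noteq> b" using tri_third assms by blast
  with 1 have "pp a b \<in> s" by blast
  then show ?thesis using 1 assms by blast
qed

lemma tri_card: "s \<in> T \<Longrightarrow> card s = 3"
  unfolding T_mem using irr by (auto simp: card_insert_if)

lemma tri_share2: "s \<in> T \<Longrightarrow> r \<in> T \<Longrightarrow> a \<in> s \<Longrightarrow> a \<in> r \<Longrightarrow> b \<in> s \<Longrightarrow> b \<in> r \<Longrightarrow> a \<noteq> b \<Longrightarrow> s = r"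
  using tri_eq by metis

lemma finite_T: "finite T"
  by (rule finite_subset[of _ "Pow UNIV"]) auto

lemma finN: "finite (N v)" by simp

definition Tri where "Tri v = {r\<in>T. v \<in> r}"

lemma card_Tri: "2 * card (Tri v) = k"
proof -
  have eq: "N v = (\<Union>r\<in>Tri v. r - {v})"
  proof
    show "N v \<subseteq> (\<Union>r\<in>Tri v. r - {v})"
    proof
      fix w assume "w \<in> N v"
      then have "E v w" by (simp add: N_def)
      then have "{v,w,pp v w} \<in> Tri v" "w \<in> {v,w,pp v w} - {v}"
        using tri_edge irr by (auto simp: Tri_def)
      then show "w \<in> (\<Union>r\<in>Tri v. r - {v})" by blast
    qed
    show "(\<Union>r\<in>Tri v. r - {v}) \<subseteq> N v"
      using tri_adj by (auto simp: Tri_def N_def)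
  qed
  have "card (\<Union>r\<in>Tri v. r - {v}) = (\<Sum>r\<in>Tri v. card (r - {v}))"
  proof (rule card_UN_disjoint)
    show "finite (Tri v)" using finite_T by (simp add: Tri_def)
    show "\<forall>i\<in>Tri v. finite (i - {v})" by simp
    show "\<forall>i\<in>Tri v. \<forall>j\<in>Tri v. i \<noteq> j \<longrightarrow> (i - {v}) \<inter> (j - {v}) = {}"
    proof (intro ballI impI)
      fix i j assume ij: "i \<in> Tri v" "j \<in> Tri v" "i \<noteq> j"
      show "(i - {v}) \<inter> (j - {v}) = {}"
      proof (rule ccontr)
        assume "(i - {v}) \<inter> (j - {v}) \<noteq> {}"
        then obtain w where "w \<in> i" "w \<in> j" "w \<noteq> v" by blast
        with ij tri_share2[of i j v w] show False by (auto simp: Tri_def)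
      qed
    qed
  qed
  also have "\<dots> = (\<Sum>r\<in>Tri v. 2)"
    by (rule sum.cong) (auto simp: Tri_def tri_card)
  finally show ?thesis using eq cardN[of v] by simp
qed

definition adjT where "adjT t x \<longleftrightarrow> (\<exists>a\<in>t. E a x)"

lemma one_adj: "t \<in> T \<Longrightarrow> x \<notin> t \<Longrightarrow> a \<in> t \<Longrightarrow> b \<in> t \<Longrightarrow> E a x \<Longrightarrow> E b x \<Longrightarrow> a = b"
proof (rule ccontr)
  assume a: "t \<in> T" "x \<notin> t" "a \<in> t" "b \<in> t" "E a x" "E b x" "a \<noteq> b"
  then have "t = {a,b,pp a b}" using tri_eq by blast
  moreover have "E a b" using tri_adj a by blast
  then have "pp a b = x" using pp_uniq a(5,6) by blast
  ultimately show False using a by blast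
qed

end

context srg1 begin

lemma card_Tri': "card (Tri v) = k div 2" using card_Tri[of v] by linarith

lemma tri_meet1: "s\<in>T \<Longrightarrow> r\<in>T \<Longrightarrow> r\<noteq>s \<Longrightarrow> a\<in>r \<Longrightarrow> a \<in> s \<Longrightarrow> b\<in>r \<Longrightarrow> b \<in> s \<Longrightarrow> a=b"
  using tri_share2 by blast

lemma mu3: assumes t: "t\<in>T" and s: "s\<in>T" and d: "t\<inter>s={}"
  shows "card {r\<in>T. C3_adj t r \<and> C3_adj s r} = card {b\<in>s. adjT t b}"
proof -
  let ?R = "{r\<in>T. C3_adj t r \<and> C3_adj s r}"
  let ?B = "{b\<in>s. adjT t b}"
  have single: "\<exists>b. r \<inter> u = {b}" if H: "r \<in> T" "u \<in> T" "r \<noteq> u" "r \<inter> u \<noteq> {}" for r u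
  proof -
    obtain b where b: "b \<in> r" "b \<in> u" using H(4) by blast
    have "r \<inter> u = {b}"
    proof (intro equalityI subsetI)
      fix x assume "x \<in> r \<inter> u"
      then show "x \<in> {b}" using tri_meet1[of u r x b] H b by auto
    qed (use b in auto)
    then show ?thesis by blast
  qed
  define g where "g r = the_elem (r \<inter> s)" for r
  have rs: "r \<inter> s = {g r}" if "r \<in> ?R" for r
  proof -
    from that have r: "r\<in>T" "r \<noteq> s" "r \<inter> s \<noteq> {}" by (auto simp: C3_adj_def)
    obtain b where "r \<inter> s = {b}" using single[OF r(1) s r(2,3)] by blast
    then show ?thesis by (simp add: g_def)
  qed
  have rt: "\<exists>a. r \<inter> t = {a}" if "r \<in> ?R" for r
  proof -
    from that have r: "r\<in>T" "r \<noteq> t" "r \<inter> t \<noteq> {}" by (auto simp: C3_adj_def)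
    show ?thesis using single[OF r(1) t r(2,3)] .
  qed
  have RT: "r \<in> T" if "r \<in> ?R" for r using that by simp
  have "bij_betw g ?R ?B"
  proof (rule bij_betw_imageI)
    show "inj_on g ?R"
    proof
      fix r1 r2 assume r1: "r1 \<in> ?R" and r2: "r2 \<in> ?R" and eq: "g r1 = g r2"
      obtain a1 where a1: "r1 \<inter> t = {a1}" using rt r1 by blast
      obtain a2 where a2: "r2 \<inter> t = {a2}" using rt r2 by blast
      define b where "b = g r1"
      have b1: "r1 \<inter> s = {b}" using rs[OF r1] b_def by simp
      have b2: "r2 \<inter> s = {b}" using rs[OF r2] b_def eq by simp
      have bs: "b \<in> s" using b1 by auto
      have bt: "b \<notin> t" using bs d by auto
      have a1t: "a1 \<in> t" "a1 \<in> r1" using a1 by auto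
      have a2t: "a2 \<in> t" "a2 \<in> r2" using a2 by auto
      have br: "b \<in> r1" "b \<in> r2" using b1 b2 by auto
      have ne: "a1 \<noteq> b" "a2 \<noteq> b" using a1t a2t bt by auto
      have e1: "E a1 b" using tri_adj[OF RT[OF r1] a1t(2) br(1) ne(1)] .
      have e2: "E a2 b" using tri_adj[OF RT[OF r2] a2t(2) br(2) ne(2)] .
      have "a1 = a2" using one_adj[OF t bt a1t(1) a2t(1) e1 e2] .
      then show "r1 = r2" using tri_share2[OF RT[OF r1] RT[OF r2] a1t(2) _ br(1) br(2) ne(1)] a2t(2) by simp
    qed
    show "g ` ?R = ?B"
    proof
      show "g ` ?R \<subseteq> ?B"
      proof
        fix b assume "b \<in> g ` ?R"
        then obtain r where r: "r \<in> ?R" and b: "b = g r" by blast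
        obtain a where a: "r \<inter> t = {a}" using rt r by blast
        have bs: "r \<inter> s = {b}" using rs[OF r] b by simp
        have ar: "a \<in> r" "a \<in> t" using a by auto
        have br: "b \<in> r" "b \<in> s" using bs by auto
        have "a \<noteq> b" using ar br d by auto
        then have "E a b" using tri_adj[OF RT[OF r] ar(1) br(1)] by simp
        then show "b \<in> ?B" using ar br by (auto simp: adjT_def)
      qed
      show "?B \<subseteq> g ` ?R"
      proof
        fix b assume "b \<in> ?B"
        then obtain a where b: "b \<in> s" and a: "a \<in> t" "E a b" by (auto simp: adjT_def)
        let ?r = "{a,b,pp a b}"
        have rT: "?r \<in> T" using tri_edge a by blast
        have "b \<notin> t" using b d by auto
        then have "?r \<noteq> t" by auto
        moreover have "a \<notin> s" using a d by auto
        then have "?r \<noteq> s" by auto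
        ultimately have rR: "?r \<in> ?R" using rT a b by (auto simp: C3_adj_def)
        have "b \<in> ?r \<inter> s" using b by blast
        then have "g ?r = b" using rs[OF rR] by auto
        then show "b \<in> g ` ?R" using rR by (metis image_eqI)
      qed
    qed
  qed
  then show ?thesis by (rule bij_betw_same_card)
qed

lemma C3_deg: assumes t: "t \<in> T" shows "card {r\<in>T. C3_adj t r} = 3 * (k div 2 - 1)"
proof -
  have eq: "{r\<in>T. C3_adj t r} = (\<Union>a\<in>t. Tri a - {t})"
    by (auto simp: C3_adj_def Tri_def)
  have "card (\<Union>a\<in>t. Tri a - {t}) = (\<Sum>a\<in>t. card (Tri a - {t}))"
  proof (rule card_UN_disjoint)
    show "finite t" using tri_card[OF t] card_ge_0_finite by fastforce
    show "\<forall>i\<in>t. finite (Tri i - {t})" using finite_T by (simp add: Tri_def)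
    show "\<forall>i\<in>t. \<forall>j\<in>t. i \<noteq> j \<longrightarrow> (Tri i - {t}) \<inter> (Tri j - {t}) = {}"
      using tri_share2[of _ t] t by (auto simp: Tri_def) 
  qed
  also have "\<dots> = (\<Sum>a\<in>t. k div 2 - 1)"
  proof (rule sum.cong)
    fix a assume "a \<in> t"
    then have "t \<in> Tri a" using t by (simp add: Tri_def)
    then show "card (Tri a - {t}) = k div 2 - 1" using card_Tri' finite_T by (simp add: Tri_def)
  qed simp
  finally show ?thesis using eq tri_card[OF t] by simp
qed

lemma C3_lam: assumes t: "t \<in> T" and s: "s \<in> T" and ts: "C3_adj t s"
  shows "card {r\<in>T. C3_adj t r \<and> C3_adj s r} = k div 2 - 2"
proof -
  from ts obtain v where v: "v \<in> t" "v \<in> s" and tns: "t \<noteq> s" by (auto simp: C3_adj_def)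
  have ts1: "t \<inter> s = {v}" using tri_meet1[OF t s] tns v by blast
  have eq: "{r\<in>T. C3_adj t r \<and> C3_adj s r} = Tri v - {t,s}"
  proof
    show "Tri v - {t,s} \<subseteq> {r\<in>T. C3_adj t r \<and> C3_adj s r}"
      using v by (auto simp: Tri_def C3_adj_def)
    show "{r\<in>T. C3_adj t r \<and> C3_adj s r} \<subseteq> Tri v - {t,s}"
    proof
      fix r assume r: "r \<in> {r\<in>T. C3_adj t r \<and> C3_adj s r}"
      then have rT: "r \<in> T" and rt: "r \<noteq> t" and rs: "r \<noteq> s" by (auto simp: C3_adj_def)
      have "v \<in> r"
      proof (rule ccontr)
        assume vr: "v \<notin> r"
        from r obtain a where a: "a \<in> r" "a \<in> t" by (auto simp: C3_adj_def)
        from r obtain b where b: "b \<in> r" "b \<in> s" by (auto simp: C3_adj_def)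
        have "a \<noteq> v" "b \<noteq> v" using a b vr by auto
        have "a \<noteq> b" using a b ts1 \<open>a \<noteq> v\<close> by blast
        have "E a b" using tri_adj[OF rT a(1) b(1) \<open>a \<noteq> b\<close>] .
        have "E v a" using tri_adj[OF t v(1) a(2)] \<open>a \<noteq> v\<close> by auto
        have "E v b" using tri_adj[OF s v(2) b(2)] \<open>b \<noteq> v\<close> by auto
        have "t = {v, a, pp v a}" using tri_eq[OF t v(1) a(2)] \<open>a \<noteq> v\<close> by auto
        moreover have "pp v a = b" using pp_uniq[OF \<open>E v a\<close> \<open>E v b\<close> \<open>E a b\<close>] .
        ultimately have "b \<in> t" by blast
        then show False using ts1 b \<open>b \<noteq> v\<close> by blast
      qed
      then show "r \<in> Tri v - {t,s}" using rT rt rs by (auto simp: Tri_def)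
    qed
  qed
  have "t \<in> Tri v" "s \<in> Tri v" using t s v by (auto simp: Tri_def)
  then have "card (Tri v - {t,s}) = card (Tri v) - 2"
    using tns finite_T by (subst card_Diff_subset) (auto simp: Tri_def)
  then show ?thesis using eq card_Tri' by simp
qed

definition Nt where "Nt t = {x. x \<notin> t \<and> adjT t x}"

lemma card_Nt: assumes t: "t \<in> T" shows "card (Nt t) = 3 * (k - 2)"
proof -
  have ft: "finite t" using tri_card[OF t] card_ge_0_finite by fastforce
  have eq: "Nt t = (\<Union>a\<in>t. N a - t)"
    by (auto simp: Nt_def adjT_def N_def)
  have "card (\<Union>a\<in>t. N a - t) = (\<Sum>a\<in>t. card (N a - t))"
  proof (rule card_UN_disjoint)
    show "finite t" by (rule ft)
    show "\<forall>i\<in>t. finite (N i - t)" by simp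
    show "\<forall>i\<in>t. \<forall>j\<in>t. i \<noteq> j \<longrightarrow> (N i - t) \<inter> (N j - t) = {}"
      using one_adj[OF t] by (auto simp: N_def)
  qed
  also have "\<dots> = (\<Sum>a\<in>t. k - 2)"
  proof (rule sum.cong)
    fix a assume a: "a \<in> t"
    have "N a \<inter> t = t - {a}" using tri_adj[OF t] a irr by (auto simp: N_def)
    moreover have "card (t - {a}) = 2" using tri_card[OF t] a ft by simp
    ultimately show "card (N a - t) = k - 2"
      using card_Diff_subset_Int[of "N a" t] ft cardN by simp
  qed simp
  finally show ?thesis using eq tri_card[OF t] by simp
qed

lemma srg_identity: "k * (k - 2) = (n - k - 1) * \<mu>"
proof -
  fix v :: 'a
  define M where "M = {w. w \<noteq> v \<and> \<not> E v w}"
  have "(\<Sum>y\<in>N v. card {w\<in>M. E y w}) = (\<Sum>y\<in>N v. \<Sum>w\<in>M. if E y w then 1 else 0)"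
    by (simp add: card_filter_sum)
  also have "\<dots> = (\<Sum>w\<in>M. \<Sum>y\<in>N v. if E y w then 1 else 0)" by (rule sum.swap)
  also have "\<dots> = (\<Sum>w\<in>M. card {y\<in>N v. E y w})" by (simp add: card_filter_sum)
  finally have swap: "(\<Sum>y\<in>N v. card {w\<in>M. E y w}) = (\<Sum>w\<in>M. card {y\<in>N v. E y w})" .
  have l: "card {w\<in>M. E y w} = k - 2" if y: "y \<in> N v" for y
  proof -
    have vy: "E v y" using y by (simp add: N_def)
    have "{w\<in>M. E y w} = N y - {v, pp v y}"
    proof
      show "{w\<in>M. E y w} \<subseteq> N y - {v, pp v y}" using pp[OF vy] by (auto simp: M_def N_def)
      show "N y - {v, pp v y} \<subseteq> {w\<in>M. E y w}"
        using pp_uniq[OF vy] symE by (auto simp: M_def N_def) 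
    qed
    moreover have "{v, pp v y} \<subseteq> N y" using pp[OF vy] vy symE by (auto simp: N_def)
    moreover have "card {v, pp v y} = 2" using pp_ne[OF vy] by (auto simp: card_insert_if)
    ultimately show ?thesis using cardN[of y] by (simp add: card_Diff_subset)
  qed
  have r: "card {y\<in>N v. E y w} = \<mu>" if w: "w \<in> M" for w
  proof -
    have "{y\<in>N v. E y w} = N v \<inter> N w" using symE by (auto simp: N_def)
    then show ?thesis using mu[of v w] w by (auto simp: M_def)
  qed
  have cM: "card M = n - k - 1"
  proof -
    have "M = UNIV - insert v (N v)" by (auto simp: M_def N_def)
    moreover have "card (insert v (N v)) = k + 1" using irr cardN[of v] by (simp add: N_def)
    ultimately show ?thesis using cardU by (simp add: card_Diff_subset)
  qed
  have "(\<Sum>y\<in>N v. card {w\<in>M. E y w}) = k * (k - 2)" using l cardN[of v] by simp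
  moreover have "(\<Sum>w\<in>M. card {y\<in>N v. E y w}) = (n - k - 1) * \<mu>" using r cM by simp
  ultimately show ?thesis using swap by simp
qed

end

context srg1 begin

lemma pp_bij: "bij_betw (pp x) (N x) (N x)"
proof (rule bij_betw_byWitness[where f' = "pp x"])
  show "\<forall>a\<in>N x. pp x (pp x a) = a" using pp_inv by (simp add: N_def)
  show "\<forall>a'\<in>N x. pp x (pp x a') = a'" using pp_inv by (simp add: N_def)
  show "pp x ` N x \<subseteq> N x" using pp by (auto simp: N_def)
  show "pp x ` N x \<subseteq> N x" using pp by (auto simp: N_def)
qed

lemma tri_of_edge_card:
  assumes "E x y"
  shows "card {b\<in>{x,y,pp x y}. P b} = of_bool (P x) + of_bool (P y) + of_bool (P (pp x y))"
proof -
  have "x \<noteq> y" using assms irr by auto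
  then show ?thesis using card3_filter[of x y "pp x y" P] pp_ne[OF assms] by auto
qed

lemma finite_t: "t \<in> T \<Longrightarrow> finite t"
  using tri_card card_ge_0_finite by fastforce

lemma far_eq:
  assumes t: "t \<in> T" and xt: "x \<notin> t" and nx: "\<not> adjT t x"
    and C: "\<And>s. s \<in> T \<Longrightarrow> t \<inter> s = {} \<Longrightarrow> card {b\<in>s. adjT t b} = c"
    and k1: "k \<ge> 1"
  shows "c * k = 6 * \<mu>" and "c \<le> 2"
proof -
  let ?A = "{y\<in>N x. adjT t y}"
  have cs: "of_bool (adjT t y) + of_bool (adjT t (pp x y)) = c" if y: "y \<in> N x" for y
  proof -
    have xy: "E x y" using y by (simp add: N_def)
    have "{x,y,pp x y} \<in> T" using tri_edge[OF xy] .
    moreover have "t \<inter> {x,y,pp x y} = {}"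
    proof -
      have "y \<notin> t" using nx xy symE by (auto simp: adjT_def)
      moreover have "pp x y \<notin> t" using nx pp[OF xy] symE by (auto simp: adjT_def)
      ultimately show ?thesis using xt by auto
    qed
    ultimately have "card {b\<in>{x,y,pp x y}. adjT t b} = c" using C by blast
    then show ?thesis using tri_of_edge_card[OF xy, of "adjT t"] nx by simp
  qed
  obtain y where y: "y \<in> N x" using cardN[of x] k1 by (metis card.empty ex_in_conv not_one_le_zero)
  from cs[OF y] show "c \<le> 2" by (cases "adjT t y"; cases "adjT t (pp x y)"; auto)
  have sum1: "(\<Sum>y\<in>N x. of_bool (adjT t y) + of_bool (adjT t (pp x y))) = c * k"
    using cs cardN[of x] by simp
  have "(\<Sum>y\<in>N x. of_bool (adjT t (pp x y)) :: nat) = (\<Sum>y\<in>N x. of_bool (adjT t y))"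
    using sum.reindex_bij_betw[OF pp_bij[of x], of "\<lambda>y. of_bool (adjT t y) :: nat"] by simp
  moreover have "(\<Sum>y\<in>N x. of_bool (adjT t y) :: nat) = card ?A"
    by (simp add: card_filter_sum of_bool_def)
  ultimately have "c * k = 2 * card ?A" using sum1 by (simp add: sum.distrib)
  moreover have "card ?A = 3 * \<mu>"
  proof -
    have eq: "?A = (\<Union>a\<in>t. N x \<inter> N a)" using symE by (auto simp: adjT_def N_def)
    have "card (\<Union>a\<in>t. N x \<inter> N a) = (\<Sum>a\<in>t. card (N x \<inter> N a))"
    proof (rule card_UN_disjoint)
      show "finite t" using finite_t[OF t] .
      show "\<forall>i\<in>t. finite (N x \<inter> N i)" by simp
      show "\<forall>i\<in>t. \<forall>j\<in>t. i \<noteq> j \<longrightarrow> (N x \<inter> N i) \<inter> (N x \<inter> N j) = {}"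
      proof (intro ballI impI)
        fix i j assume ij: "i \<in> t" "j \<in> t" "i \<noteq> j"
        show "(N x \<inter> N i) \<inter> (N x \<inter> N j) = {}"
        proof (rule ccontr)
          assume "(N x \<inter> N i) \<inter> (N x \<inter> N j) \<noteq> {}"
          then obtain w where w: "E x w" "E i w" "E j w" by (auto simp: N_def)
          have "w \<notin> t" using w(1) nx symE by (auto simp: adjT_def)
          then show False using one_adj[OF t _ ij(1,2) w(2,3)] ij(3) by blast
        qed
      qed
    qed
    also have "\<dots> = (\<Sum>a\<in>t. \<mu>)"
    proof (rule sum.cong)
      fix a assume a: "a \<in> t"
      have "x \<noteq> a" using a xt by auto
      moreover have "\<not> E x a" using a nx symE by (auto simp: adjT_def)
      ultimately show "card (N x \<inter> N a) = \<mu>" using mu by blast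
    qed simp
    finally show ?thesis using eq tri_card[OF t] by simp
  qed
  ultimately show "c * k = 6 * \<mu>" by simp
qed

lemma near_eq:
  assumes t: "t \<in> T" and a: "a \<in> t" and xt: "x \<notin> t" and ax: "E a x"
    and C: "\<And>s. s \<in> T \<Longrightarrow> t \<inter> s = {} \<Longrightarrow> card {b\<in>s. adjT t b} = c"
  shows "c * (k - 2) = (k - 2) + 4 * (\<mu> - 1)"
proof -
  have xa: "E x a" using ax symE by simp
  define z where "z = pp x a"
  have xz: "E x z" and az: "E a z" using pp[OF xa] z_def by auto
  have zna: "z \<noteq> a" using pp_ne[OF xa] z_def by auto
  have zt: "z \<notin> t"
  proof
    assume "z \<in> t"
    then show False using one_adj[OF t xt \<open>z \<in> t\<close> a _ ax] xz symE zna by auto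
  qed
  define D where "D = N x - {a, z}"
  have nt: "w \<notin> t" if "E x w" "w \<noteq> a" for w
  proof
    assume "w \<in> t"
    then show False using one_adj[OF t xt \<open>w \<in> t\<close> a _ ax] that symE by auto
  qed
  have Dpp: "pp x y \<in> D" if y: "y \<in> D" for y
  proof -
    have xy: "E x y" using y by (simp add: D_def N_def)
    have "pp x y \<noteq> a"
    proof
      assume "pp x y = a"
      then have "y = z" using pp_inv[OF xy] z_def by simp
      then show False using y by (simp add: D_def)
    qed
    moreover have "pp x y \<noteq> z"
    proof
      assume "pp x y = z"
      then have "y = a" using pp_inv[OF xy] pp_inv[OF xa] z_def by metis
      then show False using y by (simp add: D_def)
    qed
    ultimately show ?thesis using pp[OF xy] by (simp add: D_def N_def)
  qed
  have Dbij: "bij_betw (pp x) D D"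
  proof (rule bij_betw_byWitness[where f' = "pp x"])
    show "\<forall>y\<in>D. pp x (pp x y) = y" using pp_inv by (simp add: D_def N_def)
    show "\<forall>y\<in>D. pp x (pp x y) = y" using pp_inv by (simp add: D_def N_def)
    show "pp x ` D \<subseteq> D" using Dpp by auto
    show "pp x ` D \<subseteq> D" using Dpp by auto
  qed
  have cs: "1 + of_bool (adjT t y) + of_bool (adjT t (pp x y)) = c" if y: "y \<in> D" for y
  proof -
    have xy: "E x y" using y by (simp add: D_def N_def)
    have "{x,y,pp x y} \<in> T" using tri_edge[OF xy] .
    moreover have "t \<inter> {x,y,pp x y} = {}"
    proof -
      have "y \<notin> t" using nt[OF xy] y by (auto simp: D_def)
      moreover have "pp x y \<notin> t" using nt[of "pp x y"] Dpp[OF y] by (auto simp: D_def N_def)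
      ultimately show ?thesis using xt by auto
    qed
    ultimately have "card {b\<in>{x,y,pp x y}. adjT t b} = c" using C by blast
    moreover have "adjT t x" using a ax by (auto simp: adjT_def)
    ultimately show ?thesis using tri_of_edge_card[OF xy, of "adjT t"] by simp
  qed
  have cD: "card D = k - 2"
  proof -
    have "{a, z} \<subseteq> N x" using xa xz by (auto simp: N_def)
    moreover have "card {a, z} = 2" using zna by (auto simp: card_insert_if)
    ultimately show ?thesis using cardN[of x] by (simp add: D_def card_Diff_subset)
  qed
  have sum1: "(\<Sum>y\<in>D. 1 + of_bool (adjT t y) + of_bool (adjT t (pp x y))) = c * (k - 2)"
    using cs cD by simp
  have s2: "(\<Sum>y\<in>D. of_bool (adjT t (pp x y)) :: nat) = (\<Sum>y\<in>D. of_bool (adjT t y))"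
    using sum.reindex_bij_betw[OF Dbij, of "\<lambda>y. of_bool (adjT t y) :: nat"] by simp
  have s3: "(\<Sum>y\<in>D. of_bool (adjT t y) :: nat) = card {y\<in>D. adjT t y}"
    using card_filter_sum[of D "adjT t"] by (simp add: of_bool_def)
  have s4: "(\<Sum>y\<in>D. 1 + of_bool (adjT t y) + of_bool (adjT t (pp x y)) :: nat)
     = (\<Sum>y\<in>D. 1) + (\<Sum>y\<in>D. of_bool (adjT t y)) + (\<Sum>y\<in>D. of_bool (adjT t (pp x y)))"
    by (simp only: sum.distrib)
  have "c * (k - 2) = (k - 2) + 2 * card {y\<in>D. adjT t y}"
    using sum1 s2 s3 s4 cD by simp
  moreover have "card {y\<in>D. adjT t y} = 2 * (\<mu> - 1)"
  proof -
    have eq: "{y\<in>D. adjT t y} = (\<Union>b\<in>t - {a}. N x \<inter> N b - {a})"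
    proof (intro equalityI subsetI)
      fix y assume "y \<in> {y\<in>D. adjT t y}"
      then obtain b where y: "y \<in> D" "b \<in> t" "E b y" by (auto simp: adjT_def)
      have xy: "E x y" using y by (simp add: D_def N_def)
      have "b \<noteq> a"
      proof
        assume "b = a"
        then have "pp x a = y" using pp_uniq[OF xa xy] y(3) by simp
        then show False using y(1) z_def by (simp add: D_def)
      qed
      then show "y \<in> (\<Union>b\<in>t - {a}. N x \<inter> N b - {a})" using y xy by (auto simp: N_def D_def)
    next
      fix y assume "y \<in> (\<Union>b\<in>t - {a}. N x \<inter> N b - {a})"
      then obtain b where b: "b \<in> t" "b \<noteq> a" and y: "E x y" "E b y" "y \<noteq> a" by (auto simp: N_def)
      have "y \<noteq> z"
      proof
        assume "y = z"
        then have "E b z" using y by simp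
        then show False using one_adj[OF t zt b(1) a _ az] b(2) by simp
      qed
      then show "y \<in> {y\<in>D. adjT t y}" using y b by (auto simp: D_def N_def adjT_def)
    qed
    have "card (\<Union>b\<in>t - {a}. N x \<inter> N b - {a}) = (\<Sum>b\<in>t - {a}. card (N x \<inter> N b - {a}))"
    proof (rule card_UN_disjoint)
      show "finite (t - {a})" using finite_t[OF t] by simp
      show "\<forall>i\<in>t - {a}. finite (N x \<inter> N i - {a})" by simp
      show "\<forall>i\<in>t - {a}. \<forall>j\<in>t - {a}. i \<noteq> j \<longrightarrow> (N x \<inter> N i - {a}) \<inter> (N x \<inter> N j - {a}) = {}"
      proof (intro ballI impI)
        fix i j assume ij: "i \<in> t - {a}" "j \<in> t - {a}" "i \<noteq> j"
        show "(N x \<inter> N i - {a}) \<inter> (N x \<inter> N j - {a}) = {}"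
        proof (rule ccontr)
          assume "(N x \<inter> N i - {a}) \<inter> (N x \<inter> N j - {a}) \<noteq> {}"
          then obtain w where w: "E x w" "E i w" "E j w" "w \<noteq> a" by (auto simp: N_def)
          have "w \<notin> t" using nt[OF w(1) w(4)] .
          then show False using one_adj[OF t _ _ _ w(2,3)] ij by blast
        qed
      qed
    qed
    also have "\<dots> = (\<Sum>b\<in>t - {a}. \<mu> - 1)"
    proof (rule sum.cong)
      fix b assume b: "b \<in> t - {a}"
      have "x \<noteq> b" using b xt by auto
      moreover have "\<not> E x b"
      proof
        assume "E x b"
        then show False using one_adj[OF t xt _ a _ ax] b symE by auto
      qed
      ultimately have "card (N x \<inter> N b) = \<mu>" using mu by blast
      moreover have "a \<in> N x \<inter> N b" using xa tri_adj[OF t _ a] b symE by (auto simp: N_def)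
      ultimately show "card (N x \<inter> N b - {a}) = \<mu> - 1" by simp
    qed simp
    also have "\<dots> = 2 * (\<mu> - 1)" using tri_card[OF t] a finite_t[OF t] by simp
    finally show ?thesis using eq by simp
  qed
  ultimately show ?thesis by simp
qed

lemma arith_k6:
  fixes c K m :: nat
  assumes "c * K = 6 * m" "c * (K - 2) = (K - 2) + 4 * (m - 1)" "c \<le> 2" "K \<ge> 3" "m \<ge> 1"
  shows "K = 6 \<and> (m = 1 \<or> m = 2)"
proof -
  have "c = 0 \<or> c = 1 \<or> c = 2" using assms(3) by auto
  then show ?thesis using assms by (auto simp: algebra_simps)
qed

lemma far_case:
  assumes t: "t \<in> T" and xt: "x \<notin> t" and nx: "\<not> adjT t x"
    and C: "\<And>s. s \<in> T \<Longrightarrow> t \<inter> s = {} \<Longrightarrow> card {b\<in>s. adjT t b} = c"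
    and k3: "k \<ge> 3" and m1: "\<mu> \<ge> 1"
  shows "k = 6 \<and> (\<mu> = 1 \<or> \<mu> = 2)"
proof -
  obtain a where a: "a \<in> t" using t by (auto simp: T_mem)
  have "N a \<inter> t \<subseteq> t - {a}" using irr by (auto simp: N_def)
  then have "card (N a \<inter> t) \<le> 2" using tri_card[OF t] a finite_t[OF t]
    by (metis card_Diff_singleton card_mono finite_Diff numeral_3_eq_3 diff_Suc_1 numeral_2_eq_2)
  then have "card (N a - t) \<ge> 1" using cardN[of a] k3 card_Diff_subset_Int[of "N a" t] finite_t[OF t] by simp
  then obtain x' where x': "x' \<in> N a" "x' \<notin> t" by (metis Diff_iff card.empty ex_in_conv not_one_le_zero)
  have e1: "c * k = 6 * \<mu>" "c \<le> 2" using far_eq[OF t xt nx C] k3 by auto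
  have e2: "c * (k - 2) = (k - 2) + 4 * (\<mu> - 1)" using near_eq[OF t a x'(2) _ C] x'(1) by (simp add: N_def)
  show ?thesis using arith_k6[OF e1(1) e2 e1(2) k3 m1] .
qed

end

context srg1 begin

lemma A2_general:
  assumes H: "\<And>i l. i \<noteq> l \<Longrightarrow> \<not> E i l \<Longrightarrow> card (N i \<inter> N l) = 0"
  shows "adj_matrix E *v (adj_matrix E *v x) = real k *\<^sub>R x + adj_matrix E *v x"
proof -
  have c: "(\<Sum>j\<in>UNIV. (if E i j then 1 else 0) * (if E j l then 1 else 0) :: real)
      = (if i = l then real k else if E i l then 1 else 0)" for i l
  proof -
    have "(\<Sum>j\<in>UNIV. (if E i j then 1 else 0) * (if E j l then 1 else 0) :: real)
        = (\<Sum>j\<in>UNIV. if j \<in> N i \<inter> N l then 1 else 0)"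
      by (rule sum.cong) (auto simp: N_def symE)
    also have "\<dots> = real (card (N i \<inter> N l))"
      by (simp add: sum.If_cases) (metis Int_def)
    also have "\<dots> = (if i = l then real k else if E i l then 1 else 0)"
      using cardN[of i] lam[of i l] H[of i l] by auto
    finally show ?thesis .
  qed
  show ?thesis
  proof (rule Finite_Cartesian_Product.vec_eq_iff[THEN iffD2], rule allI)
    fix i
    have "(adj_matrix E *v (adj_matrix E *v x)) $ i
        = (\<Sum>j\<in>UNIV. (if E i j then 1 else 0) * (\<Sum>l\<in>UNIV. (if E j l then 1 else 0) * x $ l))"
      by (simp add: matrix_vector_mult_def adj_matrix_def)
    also have "\<dots> = (\<Sum>j\<in>UNIV. \<Sum>l\<in>UNIV. (if E i j then 1 else 0) * (if E j l then 1 else 0) * x $ l)"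
      by (simp add: sum_distrib_left mult.assoc)
    also have "\<dots> = (\<Sum>l\<in>UNIV. \<Sum>j\<in>UNIV. (if E i j then 1 else 0) * (if E j l then 1 else 0) * x $ l)"
      by (rule sum.swap)
    also have "\<dots> = (\<Sum>l\<in>UNIV. (if i = l then real k else if E i l then 1 else 0) * x $ l)"
      by (simp add: sum_distrib_right[symmetric] c)
    also have "\<dots> = (\<Sum>l\<in>UNIV. (if i = l then real k * x $ l else 0) + (if E i l then 1 else 0) * x $ l)"
      by (rule sum.cong) (auto simp: irr)
    also have "\<dots> = real k * x $ i + (\<Sum>l\<in>UNIV. (if E i l then 1 else 0) * x $ l)"
      by (simp add: sum.distrib)
    also have "\<dots> = (real k *\<^sub>R x + adj_matrix E *v x) $ i"
      by (simp add: matrix_vector_mult_def adj_matrix_def)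
    finally show "(adj_matrix E *v (adj_matrix E *v x)) $ i = (real k *\<^sub>R x + adj_matrix E *v x) $ i" .
  qed
qed

lemma nonboring:
  assumes nb: "\<not> boring E"
  shows "\<mu> \<ge> 1 \<and> (\<exists>u v. u \<noteq> v \<and> \<not> E u v)"
proof (rule ccontr)
  assume "\<not> (\<mu> \<ge> 1 \<and> (\<exists>u v. u \<noteq> v \<and> \<not> E u v))"
  then have H: "\<And>i l. i \<noteq> l \<Longrightarrow> \<not> E i l \<Longrightarrow> card (N i \<inter> N l) = 0"
    using mu by fastforce
  define r where "r = sqrt (1 + 4 * real k)"
  have sub: "adj_eigenvalues E \<subseteq> {(1 + r) / 2, (1 - r) / 2}"
  proof
    fix c assume "c \<in> adj_eigenvalues E"
    then obtain x where x: "x \<noteq> 0" "adj_matrix E *v x = c *\<^sub>R x" by (auto simp: adj_eigenvalues_def)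
    have "adj_matrix E *v (adj_matrix E *v x) = c *\<^sub>R (adj_matrix E *v x)"
      using x(2) by (simp add: matrix_vector_mult_scaleR)
    then have "(c * c) *\<^sub>R x = real k *\<^sub>R x + c *\<^sub>R x" using A2_general[OF H, of x] x(2) by simp
    then have "(c * c - real k - c) *\<^sub>R x = 0" by (simp add: algebra_simps)
    then have cc: "c * c = real k + c" using x(1) by simp
    have "(2 * c - 1)^2 = 1 + 4 * real k" using cc by (simp add: power2_eq_square algebra_simps)
    then have "\<bar>2 * c - 1\<bar> = r" unfolding r_def by (metis real_sqrt_abs)
    then show "c \<in> {(1 + r) / 2, (1 - r) / 2}" by (cases "2 * c - 1 \<ge> 0") auto
  qed
  have "card (adj_eigenvalues E) \<le> card {(1 + r) / 2, (1 - r) / 2}"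
    by (rule card_mono[OF _ sub]) simp
  also have "\<dots> \<le> 2" by (simp add: card_insert_if)
  finally show False using nb by (simp add: boring_def)
qed

end

definition mtr :: "'b::comm_ring_1 Matrix.mat \<Rightarrow> 'b" where
  "mtr A = (\<Sum>i\<in>{0..<dim_row A}. A $$ (i,i))"

lemma mtr_comm:
  fixes A B :: "'b::comm_ring_1 Matrix.mat"
  assumes A: "A \<in> carrier_mat n m" and B: "B \<in> carrier_mat m n"
  shows "mtr (A * B) = mtr (B * A)"
proof -
  have "mtr (A * B) = (\<Sum>i\<in>{0..<n}. \<Sum>j\<in>{0..<m}. A $$ (i,j) * B $$ (j,i))"
    using A B by (simp add: mtr_def scalar_prod_def)
  also have "\<dots> = (\<Sum>j\<in>{0..<m}. \<Sum>i\<in>{0..<n}. B $$ (j,i) * A $$ (i,j))"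
    by (subst sum.swap) (simp add: mult.commute)
  also have "\<dots> = mtr (B * A)"
    using A B by (simp add: mtr_def scalar_prod_def)
  finally show ?thesis .
qed

lemma mtr_similar:
  fixes M T P Q :: "'b::comm_ring_1 Matrix.mat"
  assumes "similar_mat_wit M T P Q" and M: "M \<in> carrier_mat n n"
  shows "mtr M = mtr T" "mtr (M * M) = mtr (T * T)"
proof -
  from assms have c: "T \<in> carrier_mat n n" "P \<in> carrier_mat n n" "Q \<in> carrier_mat n n"
    and PQ: "P * Q = 1\<^sub>m n" and QP: "Q * P = 1\<^sub>m n" and MT: "M = P * T * Q"
    by (auto simp: similar_mat_wit_def Let_def)
  have "mtr M = mtr (P * (T * Q))" using MT c by simp
  also have "\<dots> = mtr ((T * Q) * P)" by (rule mtr_comm[of _ n n]) (use c in auto)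
  also have "\<dots> = mtr (T * (Q * P))" using c by simp
  also have "\<dots> = mtr T" using QP c by simp
  finally show "mtr M = mtr T" .
  have TQ: "T * Q \<in> carrier_mat n n" using c by simp
  have PTQ: "P * (T * Q) \<in> carrier_mat n n" using c by simp
  have e1: "(T * Q) * (P * (T * Q)) = T * (Q * (P * (T * Q)))"
    by (rule assoc_mult_mat[OF c(1) c(3) PTQ])
  have e2: "Q * (P * (T * Q)) = (Q * P) * (T * Q)"
    by (rule assoc_mult_mat[OF c(3) c(2) TQ, symmetric])
  have e3: "(Q * P) * (T * Q) = T * Q" using QP left_mult_one_mat[OF TQ] by simp
  have e4: "T * (T * Q) = (T * T) * Q" by (rule assoc_mult_mat[OF c(1) c(1) c(3), symmetric])
  have e5: "(P * (T * Q)) * (P * (T * Q)) = P * ((T * Q) * (P * (T * Q)))"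
    by (rule assoc_mult_mat[OF c(2) TQ PTQ])
  have MT2: "M = P * (T * Q)" using MT c by simp
  have "M * M = P * ((T * T) * Q)" unfolding MT2 e5 e1 e2 e3 e4 ..
  then have "mtr (M * M) = mtr (P * ((T * T) * Q))" by simp
  also have "\<dots> = mtr (((T * T) * Q) * P)" by (rule mtr_comm[of _ n n]) (use c in auto)
  also have "\<dots> = mtr (T * T)"
  proof -
    have "((T * T) * Q) * P = (T * T) * (Q * P)" by (rule assoc_mult_mat) (use c in auto)
    then show ?thesis using QP c right_mult_one_mat[of "T * T" n n] by simp
  qed
  finally show "mtr (M * M) = mtr (T * T)" .
qed

lemma mtr_upper:
  fixes T :: "'b::comm_ring_1 Matrix.mat"
  assumes T: "T \<in> carrier_mat n n" and ut: "upper_triangular T"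
  shows "mtr T = sum_list (diag_mat T)" "mtr (T * T) = sum_list (map (\<lambda>x. x^2) (diag_mat T))"
proof -
  have d: "diag_mat T = map (\<lambda>i. T $$ (i,i)) [0..<n]" using T by (simp add: diag_mat_def)
  show "mtr T = sum_list (diag_mat T)" using T by (simp add: d mtr_def sum_list_sum_nth atLeast0LessThan)
  have "(T * T) $$ (i,i) = (T $$ (i,i))^2" if i: "i < n" for i
  proof -
    have "(T * T) $$ (i,i) = (\<Sum>j\<in>{0..<n}. T $$ (i,j) * T $$ (j,i))"
      using T i by (simp add: scalar_prod_def)
    also have "\<dots> = (\<Sum>j\<in>{0..<n}. if j = i then T $$ (i,i) * T $$ (i,i) else 0)"
    proof (rule sum.cong)
      fix j assume j: "j \<in> {0..<n}"
      show "T $$ (i,j) * T $$ (j,i) = (if j = i then T $$ (i,i) * T $$ (i,i) else 0)"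
      proof (cases "j < i")
        case True then show ?thesis using ut T i by (auto simp: upper_triangular_def)
      next
        case False
        then show ?thesis using ut T j by (cases "j = i") (auto simp: upper_triangular_def)
      qed
    qed simp
    also have "\<dots> = (T $$ (i,i))^2" using i by (simp add: power2_eq_square)
    finally show ?thesis .
  qed
  then show "mtr (T * T) = sum_list (map (\<lambda>x. x^2) (diag_mat T))"
    using T by (simp add: d mtr_def sum_list_sum_nth atLeast0LessThan)
qed

lemma sum_if_card:
  assumes "finite A"
  shows "(\<Sum>x\<in>A. if P x then 1 else 0 :: 'b::semiring_1) = of_nat (card {x\<in>A. P x})"
proof -
  have "of_nat (card {x\<in>A. P x}) = (of_nat (\<Sum>x\<in>A. if P x then 1 else 0 :: nat) :: 'b)"
    by (subst card_filter_sum[OF assms]) (rule refl)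
  also have "\<dots> = (\<Sum>x\<in>A. of_nat (if P x then 1 else 0 :: nat))" by (rule of_nat_sum)
  also have "\<dots> = (\<Sum>x\<in>A. if P x then 1 else 0 :: 'b)" by (rule sum.cong) auto
  finally show ?thesis by simp
qed

lemma list_count3:
  fixes es :: "complex list" and p q w :: real
  assumes "\<forall>e\<in>set es. e = of_real p \<or> e = of_real q \<or> e = of_real w"
  shows "\<exists>a f g :: nat. length es = a + f + g
     \<and> sum_list es = of_real (real a * p + real f * q + real g * w)
     \<and> sum_list (map (\<lambda>x. x^2) es) = of_real (real a * p^2 + real f * q^2 + real g * w^2)"
  using assms
proof (induction es)
  case Nil
  then show ?case by (intro exI[of _ 0]) simp
next
  case (Cons e es)
  then obtain a f g :: nat where IH: "length es = a + f + g"
     "sum_list es = of_real (real a * p + real f * q + real g * w)"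
     "sum_list (map (\<lambda>x. x^2) es) = of_real (real a * p^2 + real f * q^2 + real g * w^2)" by auto
  from Cons.prems have "e = of_real p \<or> e = of_real q \<or> e = of_real w" by simp
  then show ?case
  proof (elim disjE)
    assume e: "e = of_real p"
    show ?case
      by (rule exI[of _ "Suc a"], rule exI[of _ f], rule exI[of _ g]) (simp add: IH e algebra_simps)
  next
    assume e: "e = of_real q"
    show ?case
      by (rule exI[of _ a], rule exI[of _ "Suc f"], rule exI[of _ g]) (simp add: IH e algebra_simps)
  next
    assume e: "e = of_real w"
    show ?case
      by (rule exI[of _ a], rule exI[of _ f], rule exI[of _ "Suc g"]) (simp add: IH e algebra_simps)
  qed
qed

context srg1 begin

lemma spectral:
  fixes r s :: real
  assumes rs1: "r + s = 1 - real \<mu>" and rs2: "r * s = real \<mu> - real k"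
  shows "\<exists>a f g :: nat. a + f + g = n \<and> a * real k + f * r + g * s = 0
           \<and> a * (real k)^2 + f * r^2 + g * s^2 = real n * real k"
proof -
  obtain idx where idx: "bij_betw idx {0..<n} (UNIV :: 'a set)"
    using ex_bij_betw_nat_finite[of "UNIV :: 'a set"] cardU by auto
  have inj: "inj_on idx {0..<n}" and im: "idx ` {0..<n} = UNIV"
    using idx by (auto simp: bij_betw_def)
  have card_idx: "card {j\<in>{0..<n}. P (idx j)} = card {v. P v}" for P
  proof -
    have "idx ` {j\<in>{0..<n}. P (idx j)} = {v. P v}"
    proof (intro equalityI subsetI)
      fix x assume "x \<in> {v. P v}"
      moreover obtain j where "j \<in> {0..<n}" "x = idx j" using im by (metis UNIV_I imageE)
      ultimately show "x \<in> idx ` {j\<in>{0..<n}. P (idx j)}" by auto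
    qed auto
    moreover have "inj_on idx {j\<in>{0..<n}. P (idx j)}" using inj by (rule inj_on_subset) auto
    ultimately show ?thesis by (metis card_image)
  qed
  have idx_eq: "idx i = idx j \<longleftrightarrow> i = j" if "i < n" "j < n" for i j
    using inj that by (auto simp: inj_on_def)
  define M :: "complex Matrix.mat" where "M = Matrix.mat n n (\<lambda>(i,j). if E (idx i) (idx j) then 1 else 0)"
  have Mc: "M \<in> carrier_mat n n" by (simp add: M_def)
  have Mij: "M $$ (i,j) = (if E (idx i) (idx j) then 1 else 0)" if "i < n" "j < n" for i j
    using that by (simp add: M_def)
  have colsum: "(\<Sum>i\<in>{0..<n}. M $$ (i,j)) = of_nat k" if j: "j < n" for j
  proof -
    have "(\<Sum>i\<in>{0..<n}. M $$ (i,j)) = (\<Sum>i\<in>{0..<n}. if E (idx i) (idx j) then 1 else 0)"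
      by (rule sum.cong) (use j Mij in auto)
    also have "\<dots> = of_nat (card {i\<in>{0..<n}. E (idx i) (idx j)})"
      by (rule sum_if_card) simp
    also have "\<dots> = of_nat k" using card_idx[of "\<lambda>v. E v (idx j)"] cardN[of "idx j"] symE
      by (simp add: N_def)
    finally show ?thesis .
  qed
  have sq: "(\<Sum>j\<in>{0..<n}. M $$ (i,j) * M $$ (j,l)) =
      of_nat \<mu> + (1 - of_nat \<mu>) * M $$ (i,l) + (if i = l then of_nat k - of_nat \<mu> else 0)"
    if i: "i < n" and l: "l < n" for i l
  proof -
    have "(\<Sum>j\<in>{0..<n}. M $$ (i,j) * M $$ (j,l)) =
        (\<Sum>j\<in>{0..<n}. if E (idx i) (idx j) \<and> E (idx j) (idx l) then 1 else 0)"
      by (rule sum.cong) (use i l Mij in auto)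
    also have "\<dots> = of_nat (card {j\<in>{0..<n}. E (idx i) (idx j) \<and> E (idx j) (idx l)})"
      by (rule sum_if_card) simp
    also have "\<dots> = of_nat (card (N (idx i) \<inter> N (idx l)))"
      using card_idx[of "\<lambda>v. E (idx i) v \<and> E v (idx l)"] symE
      by (simp add: N_def Int_def)
    also have "\<dots> = of_nat \<mu> + (1 - of_nat \<mu>) * M $$ (i,l) + (if i = l then of_nat k - of_nat \<mu> else 0)"
    proof (cases "i = l")
      case True then show ?thesis using cardN[of "idx i"] Mij i irr by simp
    next
      case False
      then have ne: "idx i \<noteq> idx l" using idx_eq i l by simp
      show ?thesis
      proof (cases "E (idx i) (idx l)")
        case True then show ?thesis using lam[OF True] Mij i l False by simp
      next
        case F2: False then show ?thesis using mu[OF ne F2] Mij i l False by simp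
      qed
    qed
    finally show ?thesis .
  qed
  have eig: "e = of_nat k \<or> e^2 = (1 - of_nat \<mu>) * e + (of_nat k - of_nat \<mu>)"
    if ev: "eigenvector M v e" for e v
  proof -
    from ev have v: "v \<in> carrier_vec n" "v \<noteq> 0\<^sub>v n" "M *\<^sub>v v = e \<cdot>\<^sub>v v"
      using Mc by (auto simp: eigenvector_def)
    have dv: "dim_vec v = n" using v(1) by simp
    have Mv: "(M *\<^sub>v v) $ i = (\<Sum>j\<in>{0..<n}. M $$ (i,j) * v $ j)" if "i < n" for i
      using that Mc dv by (simp add: scalar_prod_def)
    have Mv2: "(M *\<^sub>v v) $ i = e * v $ i" if "i < n" for i
      using v(3) that dv by (metis index_smult_vec(1))
    define \<sigma> where "\<sigma> = (\<Sum>i\<in>{0..<n}. v $ i)"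
    have "(\<Sum>i\<in>{0..<n}. (M *\<^sub>v v) $ i) = (\<Sum>i\<in>{0..<n}. \<Sum>j\<in>{0..<n}. M $$ (i,j) * v $ j)"
      using Mv by simp
    also have "\<dots> = (\<Sum>j\<in>{0..<n}. (\<Sum>i\<in>{0..<n}. M $$ (i,j)) * v $ j)"
      by (subst sum.swap) (simp add: sum_distrib_right)
    also have "\<dots> = of_nat k * \<sigma>" using colsum by (simp add: \<sigma>_def sum_distrib_left)
    finally have s1: "(\<Sum>i\<in>{0..<n}. (M *\<^sub>v v) $ i) = of_nat k * \<sigma>" .
    have "(\<Sum>i\<in>{0..<n}. (M *\<^sub>v v) $ i) = e * \<sigma>" using Mv2 by (simp add: \<sigma>_def sum_distrib_left)
    with s1 have es: "e * \<sigma> = of_nat k * \<sigma>" by simp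
    show ?thesis
    proof (cases "e = of_nat k")
      case True then show ?thesis by simp
    next
      case False
      with es have \<sigma>0: "\<sigma> = 0" by simp
      obtain i where i: "i < n" "v $ i \<noteq> 0"
        using v(2) dv by (metis eq_vecI index_zero_vec(1) index_zero_vec(2))
      have "e * e * v $ i = e * (M *\<^sub>v v) $ i" using Mv2 i by simp
      also have "\<dots> = (\<Sum>j\<in>{0..<n}. M $$ (i,j) * (M *\<^sub>v v) $ j)"
        using Mv[OF i(1)] Mv2 by (simp add: sum_distrib_left mult.left_commute)
      also have "\<dots> = (\<Sum>j\<in>{0..<n}. \<Sum>l\<in>{0..<n}. M $$ (i,j) * M $$ (j,l) * v $ l)"
        using Mv by (simp add: sum_distrib_left mult.assoc)
      also have "\<dots> = (\<Sum>l\<in>{0..<n}. (\<Sum>j\<in>{0..<n}. M $$ (i,j) * M $$ (j,l)) * v $ l)"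
        by (subst sum.swap) (simp add: sum_distrib_right)
      also have "\<dots> = (\<Sum>l\<in>{0..<n}. of_nat \<mu> * v $ l + (1 - of_nat \<mu>) * (M $$ (i,l) * v $ l)
          + (if i = l then (of_nat k - of_nat \<mu>) * v $ l else 0))"
      proof (rule sum.cong)
        fix l assume l: "l \<in> {0..<n}"
        have "(\<Sum>j\<in>{0..<n}. M $$ (i,j) * M $$ (j,l)) * v $ l =
          (of_nat \<mu> + (1 - of_nat \<mu>) * M $$ (i,l) + (if i = l then of_nat k - of_nat \<mu> else 0)) * v $ l"
          using sq[OF i(1)] l by simp
        then show "(\<Sum>j\<in>{0..<n}. M $$ (i,j) * M $$ (j,l)) * v $ l = of_nat \<mu> * v $ l + (1 - of_nat \<mu>) * (M $$ (i,l) * v $ l)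
          + (if i = l then (of_nat k - of_nat \<mu>) * v $ l else 0)"
          by (cases "i = l") (simp_all add: algebra_simps)
      qed simp
      also have "\<dots> = of_nat \<mu> * \<sigma> + (1 - of_nat \<mu>) * (M *\<^sub>v v) $ i + (of_nat k - of_nat \<mu>) * v $ i"
        using i Mv[OF i(1)] by (simp add: sum.distrib \<sigma>_def sum_distrib_left)
      also have "\<dots> = ((1 - of_nat \<mu>) * e + (of_nat k - of_nat \<mu>)) * v $ i"
        using \<sigma>0 Mv2 i by (simp add: algebra_simps)
      finally have "(e * e) * v $ i = ((1 - of_nat \<mu>) * e + (of_nat k - of_nat \<mu>)) * v $ i" .
      then show ?thesis using i(2) by (simp add: power2_eq_square)
    qed
  qed
  obtain es where es: "char_poly M = (\<Prod>a\<leftarrow>es. [:- a, 1:])" "length es = n"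
    using char_poly_factorized[OF Mc] by blast
  obtain T P Q where schur: "schur_decomposition M es = (T,P,Q)" by (cases "schur_decomposition M es") auto
  from schur_decomposition[OF Mc es(1) schur]
  have sim: "similar_mat_wit M T P Q" and ut: "upper_triangular T" and dg: "diag_mat T = es" by auto
  have Tc: "T \<in> carrier_mat n n" using sim Mc by (auto simp: similar_mat_wit_def Let_def)
  have roots: "e = of_real (real k) \<or> e = of_real r \<or> e = of_real s" if e: "e \<in> set es" for e
  proof -
    have "poly (char_poly M) e = 0" using e es(1) by (simp add: poly_prod_list prod_list_zero_iff o_def)
    then have "eigenvalue M e" using eigenvalue_root_char_poly[OF Mc] by simp
    then obtain v where "eigenvector M v e" by (auto simp: eigenvalue_def)
    from eig[OF this] show ?thesis
    proof
      assume "e = of_nat k" then show ?thesis by simp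
    next
      assume q: "e^2 = (1 - of_nat \<mu>) * e + (of_nat k - of_nat \<mu>)"
      have "(e - of_real r) * (e - of_real s) = e^2 - of_real (r + s) * e + of_real (r * s)"
        by (simp add: algebra_simps power2_eq_square)
      also have "\<dots> = 0" using q rs1 rs2 by simp
      finally show ?thesis by simp
    qed
  qed
  obtain a f g :: nat where cnt: "length es = a + f + g"
     "sum_list es = of_real (a * real k + f * r + g * s)"
     "sum_list (map (\<lambda>x. x^2) es) = of_real (a * (real k)^2 + f * r^2 + g * s^2)"
    using list_count3[of es "real k" r s] roots by blast
  have tr1: "mtr M = 0" using Mc Mij irr by (simp add: mtr_def)
  have tr2: "mtr (M * M) = of_nat (n * k)"
  proof -
    have "mtr (M * M) = (\<Sum>i\<in>{0..<n}. \<Sum>j\<in>{0..<n}. M $$ (i,j) * M $$ (j,i))"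
      using Mc by (simp add: mtr_def scalar_prod_def)
    also have "\<dots> = (\<Sum>i\<in>{0..<n}. of_nat k)"
      by (rule sum.cong) (use sq irr Mij in auto)
    finally show ?thesis by simp
  qed
  have "mtr M = sum_list es" using mtr_similar(1)[OF sim Mc] mtr_upper(1)[OF Tc ut] dg by simp
  then have A1: "a * real k + f * r + g * s = 0" using tr1 cnt(2) by (metis of_real_eq_0_iff)
  have "mtr (M * M) = sum_list (map (\<lambda>x. x^2) es)"
    using mtr_similar(2)[OF sim Mc] mtr_upper(2)[OF Tc ut] dg by simp
  then have "complex_of_real (a * (real k)^2 + f * r^2 + g * s^2) = complex_of_real (real n * real k)"
    using tr2 cnt(3) by simp
  then have A2: "a * (real k)^2 + f * r^2 + g * s^2 = real n * real k" using of_real_eq_iff by blast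
  show ?thesis using A1 A2 cnt(1) es(2) by auto
qed

end

context srg1 begin

lemma higman_counts:
  assumes xy: "x \<noteq> y" "\<not> E x y"
  defines "W \<equiv> N x \<inter> N y"
  defines "V \<equiv> {z. z \<noteq> x \<and> z \<noteq> y \<and> \<not> E x z \<and> \<not> E y z}"
  shows "(real (\<mu> * (k - 4)))^2 \<le> real (\<mu> * ((k - 4) + (\<mu> - 1) * (\<mu> - 2))) * real (n - 2 - (2 * k - \<mu>))"
proof -
  have cW: "card W = \<mu>" using mu[OF xy] by (simp add: W_def)
  have A: "card {z\<in>V. E z w} = k - 4" if w: "w \<in> W" for w
  proof -
    have wx: "E w x" and wy: "E w y" using w symE by (auto simp: W_def N_def)
    have px: "E w (pp w x)" "E x (pp w x)" using pp[OF wx] by auto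
    have py: "E w (pp w y)" "E y (pp w y)" using pp[OF wy] by auto
    have eq: "{z\<in>V. E z w} = N w - {x, y, pp w x, pp w y}"
    proof (intro equalityI subsetI)
      fix z assume z: "z \<in> {z\<in>V. E z w}"
      then have "E w z" "z \<noteq> x" "z \<noteq> y" "\<not> E x z" "\<not> E y z" using symE by (auto simp: V_def)
      moreover have "z \<noteq> pp w x" using px \<open>\<not> E x z\<close> by auto
      moreover have "z \<noteq> pp w y" using py \<open>\<not> E y z\<close> by auto
      ultimately show "z \<in> N w - {x, y, pp w x, pp w y}" by (auto simp: N_def)
    next
      fix z assume z: "z \<in> N w - {x, y, pp w x, pp w y}"
      then have wz: "E w z" and ne: "z \<noteq> x" "z \<noteq> y" "z \<noteq> pp w x" "z \<noteq> pp w y" by (auto simp: N_def)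
      have "\<not> E x z" using pp_uniq[OF wx wz] ne(3) symE by auto
      moreover have "\<not> E y z" using pp_uniq[OF wy wz] ne(4) symE by auto
      ultimately show "z \<in> {z\<in>V. E z w}" using wz ne symE by (auto simp: V_def)
    qed
    have d1: "pp w x \<noteq> x" "pp w y \<noteq> y" using pp_ne[OF wx] pp_ne[OF wy] by auto
    have d2: "pp w x \<noteq> y" using px(2) xy(2) by auto
    have d3: "pp w y \<noteq> x" using py(2) xy(2) symE by auto
    have d4: "pp w x \<noteq> pp w y"
    proof
      assume u: "pp w x = pp w y"
      have wu: "E w (pp w x)" using px by simp
      have "pp w (pp w x) = x" using pp_inv[OF wx] .
      moreover have "pp w (pp w x) = y" using pp_inv[OF wy] u by simp
      ultimately show False using xy by simp
    qed
    have c4: "card {x, y, pp w x, pp w y} = 4" using xy(1) d1 d2 d3 d4 by (auto simp: card_insert_if)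
    have "{x, y, pp w x, pp w y} \<subseteq> N w" using wx wy px py by (auto simp: N_def)
    then show ?thesis using eq c4 cardN[of w] by (simp add: card_Diff_subset)
  qed
  have B: "card {z\<in>V. E z w \<and> E z w'} = \<mu> - 2" if w: "w \<in> W" "w' \<in> W" "w \<noteq> w'" for w w'
  proof -
    have wx: "E w x" "E w y" "E w' x" "E w' y" using w symE by (auto simp: W_def N_def)
    have nww: "\<not> E w w'"
    proof
      assume ww: "E w w'"
      have "pp w w' = x" using pp_uniq[OF ww wx(1) wx(3)] .
      moreover have "pp w w' = y" using pp_uniq[OF ww wx(2) wx(4)] .
      ultimately show False using xy by simp
    qed
    have eq: "{z\<in>V. E z w \<and> E z w'} = (N w \<inter> N w') - {x, y}"
    proof (intro equalityI subsetI)
      fix z assume "z \<in> {z\<in>V. E z w \<and> E z w'}"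
      then show "z \<in> (N w \<inter> N w') - {x, y}" using symE by (auto simp: V_def N_def)
    next
      fix z assume z: "z \<in> (N w \<inter> N w') - {x, y}"
      then have wz: "E w z" "E w' z" and ne: "z \<noteq> x" "z \<noteq> y" by (auto simp: N_def)
      have "\<not> E x z"
      proof
        assume xz: "E x z"
        have "pp x z = w" using pp_uniq[OF xz] wx(1) wz(1) symE by metis
        moreover have "pp x z = w'" using pp_uniq[OF xz] wx(3) wz(2) symE by metis
        ultimately show False using w(3) by simp
      qed
      moreover have "\<not> E y z"
      proof
        assume yz: "E y z"
        have "pp y z = w" using pp_uniq[OF yz] wx(2) wz(1) symE by metis
        moreover have "pp y z = w'" using pp_uniq[OF yz] wx(4) wz(2) symE by metis
        ultimately show False using w(3) by simp
      qed
      ultimately show "z \<in> {z\<in>V. E z w \<and> E z w'}" using wz ne symE by (auto simp: V_def)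
    qed
    have "card (N w \<inter> N w') = \<mu>" using mu[OF w(3) nww] .
    moreover have "{x, y} \<subseteq> N w \<inter> N w'" using wx by (auto simp: N_def)
    moreover have "card {x, y} = 2" using xy by simp
    ultimately show ?thesis using eq by (simp add: card_Diff_subset)
  qed
  define t where "t z = card {w\<in>W. E z w}" for z
  have t_sum: "t z = (\<Sum>w\<in>W. if E z w then 1 else 0)" for z
    unfolding t_def by (rule card_filter_sum) simp
  have S1: "(\<Sum>z\<in>V. t z) = \<mu> * (k - 4)"
  proof -
    have "(\<Sum>z\<in>V. t z) = (\<Sum>z\<in>V. \<Sum>w\<in>W. if E z w then 1 else 0)" by (simp add: t_sum)
    also have "\<dots> = (\<Sum>w\<in>W. \<Sum>z\<in>V. if E z w then 1 else 0)" by (rule sum.swap)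
    also have "\<dots> = (\<Sum>w\<in>W. card {z\<in>V. E z w})"
    proof (rule sum.cong[OF refl])
      fix w show "(\<Sum>z\<in>V. if E z w then 1 else 0) = card {z\<in>V. E z w}"
        by (rule card_filter_sum[symmetric]) simp
    qed
    also have "\<dots> = (\<Sum>w\<in>W. k - 4)" by (rule sum.cong[OF refl]) (simp add: A)
    finally show ?thesis using cW by simp
  qed
  have S2: "(\<Sum>z\<in>V. (t z)^2) = \<mu> * ((k - 4) + (\<mu> - 1) * (\<mu> - 2))"
  proof -
    have "(\<Sum>z\<in>V. (t z)^2) = (\<Sum>z\<in>V. \<Sum>w\<in>W. \<Sum>w'\<in>W. if E z w \<and> E z w' then 1 else 0)"
    proof (rule sum.cong)
      fix z assume "z \<in> V"
      have "(t z)^2 = (\<Sum>w\<in>W. if E z w then 1 else 0) * (\<Sum>w'\<in>W. if E z w' then 1 else 0)"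
        by (simp add: t_sum power2_eq_square)
      also have "\<dots> = (\<Sum>w\<in>W. \<Sum>w'\<in>W. (if E z w then 1 else 0) * (if E z w' then 1 else 0))"
        by (rule sum_product)
      also have "\<dots> = (\<Sum>w\<in>W. \<Sum>w'\<in>W. if E z w \<and> E z w' then 1 else 0)"
        by (intro sum.cong) auto
      finally show "(t z)^2 = (\<Sum>w\<in>W. \<Sum>w'\<in>W. if E z w \<and> E z w' then 1 else 0)" .
    qed simp
    also have "\<dots> = (\<Sum>w\<in>W. \<Sum>z\<in>V. \<Sum>w'\<in>W. if E z w \<and> E z w' then 1 else 0)" by (rule sum.swap)
    also have "\<dots> = (\<Sum>w\<in>W. \<Sum>w'\<in>W. \<Sum>z\<in>V. if E z w \<and> E z w' then 1 else 0)"
      by (rule sum.cong[OF refl]) (rule sum.swap)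
    also have "\<dots> = (\<Sum>w\<in>W. \<Sum>w'\<in>W. card {z\<in>V. E z w \<and> E z w'})"
    proof (rule sum.cong[OF refl], rule sum.cong[OF refl])
      fix w w' show "(\<Sum>z\<in>V. if E z w \<and> E z w' then 1 else 0) = card {z\<in>V. E z w \<and> E z w'}"
        by (rule card_filter_sum[symmetric]) simp
    qed
    also have "\<dots> = (\<Sum>w\<in>W. (k - 4) + (\<mu> - 1) * (\<mu> - 2))"
    proof (rule sum.cong)
      fix w assume w: "w \<in> W"
      have "(\<Sum>w'\<in>W. card {z\<in>V. E z w \<and> E z w'}) =
          card {z\<in>V. E z w \<and> E z w} + (\<Sum>w'\<in>W - {w}. card {z\<in>V. E z w \<and> E z w'})"
        using w by (simp add: sum.remove)
      also have "\<dots> = (k - 4) + (\<Sum>w'\<in>W - {w}. \<mu> - 2)"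
      proof -
        have "card {z\<in>V. E z w \<and> E z w} = k - 4" using A[OF w] by simp
        moreover have "(\<Sum>w'\<in>W - {w}. card {z\<in>V. E z w \<and> E z w'}) = (\<Sum>w'\<in>W - {w}. \<mu> - 2)"
          by (rule sum.cong[OF refl]) (use B[OF w] in auto)
        ultimately show ?thesis by simp
      qed
      also have "\<dots> = (k - 4) + (\<mu> - 1) * (\<mu> - 2)" using cW w by simp
      finally show "(\<Sum>w'\<in>W. card {z\<in>V. E z w \<and> E z w'}) = (k - 4) + (\<mu> - 1) * (\<mu> - 2)" .
    qed simp
    finally show ?thesis using cW by simp
  qed
  have cV: "card V = n - 2 - (2 * k - \<mu>)"
  proof -
    have "V = UNIV - ({x, y} \<union> (N x \<union> N y))" by (auto simp: V_def N_def)
    moreover have "card (N x \<union> N y) = 2 * k - \<mu>"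
      using card_Un_Int[of "N x" "N y"] cardN[of x] cardN[of y] cW by (simp add: W_def)
    moreover have "{x, y} \<inter> (N x \<union> N y) = {}" using xy irr symE by (auto simp: N_def)
    moreover have "card {x, y} = 2" using xy by simp
    ultimately show ?thesis using cardU card_Un_disjoint[of "{x,y}" "N x \<union> N y"]
      by (simp add: card_Diff_subset)
  qed
  have "(\<Sum>z\<in>V. real (t z))^2 \<le> (\<Sum>z\<in>V. (real (t z))^2) * real (card V)"
    by (rule sum_squared_le_sum_of_squares)
  moreover have "(\<Sum>z\<in>V. real (t z)) = real (\<mu> * (k - 4))"
    using S1 of_nat_sum[of t V, symmetric] by simp
  moreover have "(\<Sum>z\<in>V. (real (t z))^2) = real (\<mu> * ((k - 4) + (\<mu> - 1) * (\<mu> - 2)))"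
  proof -
    have "(\<Sum>z\<in>V. (real (t z))^2) = real (\<Sum>z\<in>V. (t z)^2)" by (simp add: of_nat_sum)
    then show ?thesis using S2 by simp
  qed
  ultimately show ?thesis using cV by simp
qed

lemma higman_arith:
  fixes m :: nat
  assumes "(real (m * (2 * m - 4)))^2 \<le> real (m * ((2 * m - 4) + (m - 1) * (m - 2))) * real ((6 * m - 3) - 2 - (2 * (2 * m) - m))"
    and "m \<ge> 2"
  shows "m \<le> 5"
proof (rule ccontr)
  assume "\<not> m \<le> 5"
  define j where "j = m - 6"
  have m: "m = j + 6" using \<open>\<not> m \<le> 5\<close> by (simp add: j_def)
  have "(real (m * (2 * m - 4)))^2 = (real (j + 6) * (2 * real j + 8))^2" using m by simp
  moreover have "real (m * ((2 * m - 4) + (m - 1) * (m - 2))) * real ((6 * m - 3) - 2 - (2 * (2 * m) - m))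
     = real (j + 6) * ((2 * real j + 8) + (real j + 5) * (real j + 4)) * (3 * real j + 13)"
    using m by (simp add: of_nat_diff algebra_simps)
  ultimately have "(real (j + 6) * (2 * real j + 8))^2 \<le> real (j + 6) * ((2 * real j + 8) + (real j + 5) * (real j + 4)) * (3 * real j + 13)"
    using assms(1) by simp
  moreover have "(real (j + 6) * (2 * real j + 8))^2 - real (j + 6) * ((2 * real j + 8) + (real j + 5) * (real j + 4)) * (3 * real j + 13)
     = (real j + 6) * (real j + 4) * (real j * real j + 6 * real j + 5)"
    by (simp add: power2_eq_square algebra_simps)
  moreover have "(real j + 6) * (real j + 4) * (real j * real j + 6 * real j + 5) > 0"
  proof -
    have "real j * real j \<ge> 0" by simp
    then have "real j * real j + 6 * real j + 5 > 0" by linarith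
    moreover have "real j + 6 > 0" "real j + 4 > 0" by linarith+
    ultimately show ?thesis by (intro mult_pos_pos)
  qed
  ultimately show False by linarith
qed

end

context srg1 begin

lemma cover: assumes t: "t \<in> T" and k2: "k \<ge> 2" shows "card (t \<union> Nt t) = 3 * k - 3"
proof -
  have "t \<inter> Nt t = {}" by (auto simp: Nt_def)
  then have "card (t \<union> Nt t) = card t + card (Nt t)" using finite_t[OF t] by (simp add: card_Un_disjoint)
  then show ?thesis using tri_card[OF t] card_Nt[OF t] k2 by simp
qed

lemma no_int_sol: "\<not> (\<exists>D::int. 5 * D = 36)" "\<not> (\<exists>D::int. 17 * D = 36)" by presburger+

lemma excl_31: assumes "n = 31" "k = 6" "\<mu> = 1" shows False
proof -
  define q where "q = sqrt 5"
  have q2: "q * q = 5" by (simp add: q_def)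
  have "q + - q = 1 - real \<mu>" "q * - q = real \<mu> - real k" using assms q2 by auto
  from spectral[OF this] obtain a f g :: nat where
    e1: "a + f + g = n" and e2: "real a * real k + real f * q + real g * - q = 0"
    and e3: "real a * (real k)^2 + real f * q^2 + real g * (- q)^2 = real n * real k" by blast
  have "real (a + f + g) = 31" using e1 assms by simp
  then have r1: "real a + real f + real g = 31" by simp
  have qq: "q^2 = 5" "(- q)^2 = 5" using q2 by (simp_all add: power2_eq_square)
  have "real a * 36 + real f * 5 + real g * 5 = 186" using e3 assms unfolding qq by simp
  then have "36 * real a + 5 * real f + 5 * real g = 186" by linarith
  then have a1: "real a = 1" using r1 by linarith
  then have "(real f - real g) * q = - 6" using e2 assms by (simp add: algebra_simps)
  then have sq36: "((real f - real g) * q)^2 = 36" by simp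
  have "((real f - real g) * q)^2 = (real f - real g)^2 * (q * q)" by (simp add: power_mult_distrib power2_eq_square)
  then have "(real f - real g)^2 * 5 = 36" using sq36 q2 by simp
  then have "real_of_int (5 * (int f - int g)^2) = real_of_int 36" by simp
  then have "5 * (int f - int g)^2 = 36" using of_int_eq_iff by blast
  then show False using no_int_sol(1) by blast
qed

lemma excl_19: assumes "n = 19" "k = 6" "\<mu> = 2" shows False
proof -
  define q where "q = sqrt 17"
  have q2: "q * q = 17" by (simp add: q_def)
  define r where "r = (-1 + q) / 2"
  define s where "s = (-1 - q) / 2"
  have rs: "r + s = 1 - real \<mu>" "r * s = real \<mu> - real k" using assms q2
    by (auto simp: r_def s_def field_simps)
  from spectral[OF rs] obtain a f g :: nat where
    e1: "a + f + g = n" and e2: "real a * real k + real f * r + real g * s = 0"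
    and e3: "real a * (real k)^2 + real f * r^2 + real g * s^2 = real n * real k" by blast
  have "real (a + f + g) = 19" using e1 assms by simp
  then have r1: "real a + real f + real g = 19" by simp
  have rr: "r^2 = 4 - r" "s^2 = 4 - s" using q2 by (simp_all add: r_def s_def power2_eq_square field_simps)
  have "real f * r^2 = 4 * real f - real f * r" "real g * s^2 = 4 * real g - real g * s"
    unfolding rr by (simp_all add: algebra_simps)
  then have "36 * real a + (4 * real f - real f * r) + (4 * real g - real g * s) = 114" using e3 assms by simp
  moreover have "6 * real a + real f * r + real g * s = 0" using e2 assms by simp
  ultimately have a1: "real a = 1" using r1 by linarith
  then have fg: "real f + real g = 18" using r1 by linarith
  have "real f * r + real g * s = - 6" using e2 a1 assms by simp
  then have "real f * (-1 + q) + real g * (-1 - q) = - 12" by (simp add: r_def s_def field_simps)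
  then have "(real f - real g) * q = 6" using fg by (simp add: algebra_simps)
  then have sq36: "((real f - real g) * q)^2 = 36" by simp
  have "((real f - real g) * q)^2 = (real f - real g)^2 * (q * q)" by (simp add: power_mult_distrib power2_eq_square)
  then have "(real f - real g)^2 * 17 = 36" using sq36 q2 by simp
  then have "real_of_int (17 * (int f - int g)^2) = real_of_int 36" by simp
  then have "17 * (int f - int g)^2 = 36" using of_int_eq_iff by blast
  then show False using no_int_sol(2) by blast
qed

lemma excl_21: assumes "n = 21" "k = 8" "\<mu> = 4" shows False
proof -
  have "1 + - 4 = 1 - real \<mu>" "1 * - 4 = real \<mu> - real k" using assms by auto
  from spectral[OF this] obtain a f g :: nat where
    e1: "a + f + g = n" and e2: "real a * real k + real f * 1 + real g * - 4 = 0"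
    and e3: "real a * (real k)^2 + real f * 1^2 + real g * (- 4)^2 = real n * real k" by blast
  have "real (8 * a + f) = real (4 * g)" using e2 assms by simp
  then have n2: "8 * a + f = 4 * g" by (simp only: of_nat_eq_iff)
  have "real (64 * a + f + 16 * g) = real 168" using e3 assms by simp
  then have n3: "64 * a + f + 16 * g = 168" by (simp only: of_nat_eq_iff)
  have "5 * g = 21 + 7 * a" using n2 e1 assms by linarith
  moreover have "56 * a + 20 * g = 168" using n2 n3 by linarith
  ultimately have "a = 1" by linarith
  then have "5 * g = 28" using \<open>5 * g = 21 + 7 * a\<close> by simp
  then show False by presburger
qed

end

theorem theorem15:
  fixes E :: "'a::finite \<Rightarrow> 'a \<Rightarrow> bool" and n k \<mu> :: nat
  assumes "srg UNIV E n k 1 \<mu>"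
    and "\<not> boring E"
  shows "strongly_regular (triangles UNIV E) C3_adj \<longleftrightarrow>
           (n, k, \<mu>) \<in> {(9, 4, 2), (15, 6, 3), (27, 10, 5)}"
proof -
  interpret G: srg1 E n k \<mu> by unfold_locales (rule assms(1))
  from G.nonboring[OF assms(2)] obtain u v where m1: "\<mu> \<ge> 1" and uv: "u \<noteq> v" "\<not> E u v" by blast
  have "card (G.N u \<inter> G.N v) \<ge> 1" using G.mu[OF uv] m1 by simp
  then obtain y where "y \<in> G.N u \<inter> G.N v" by (metis card.empty ex_in_conv not_one_le_zero)
  then have uy: "E u y" and vy: "E v y" by (auto simp: G.N_def)
  have yu: "E y u" and yv: "E y v" using uy vy G.symE by auto
  define z where "z = G.pp y u"
  have yz: "E y z" and uz: "E u z" using G.pp[OF yu] z_def by auto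
  have k3: "k \<ge> 3"
  proof -
    have "z \<noteq> u" using G.pp_ne[OF yu] z_def by auto
    moreover have "z \<noteq> v" using uz uv(2) by auto
    ultimately have "card {u, v, z} = 3" using uv(1) by (auto simp: card_insert_if)
    moreover have "{u, v, z} \<subseteq> G.N y" using yu yv yz by (auto simp: G.N_def)
    ultimately show ?thesis using G.cardN[of y] card_mono[of "G.N y" "{u,v,z}"] by simp
  qed
  define t0 where "t0 = {y, u, z}"
  have t0: "t0 \<in> G.T" using G.tri_edge[OF yu] by (simp add: t0_def z_def)
  show ?thesis
  proof (cases "n = 3 * k - 3")
    case True
    have nk: "n - k - 1 = 2 * (k - 2)" using True k3 by arith
    have "k * (k - 2) = (n - k - 1) * \<mu>" by (rule G.srg_identity)
    also have "\<dots> = (2 * \<mu>) * (k - 2)" unfolding nk by (simp add: mult_ac)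
    finally have "k * (k - 2) = (2 * \<mu>) * (k - 2)" .
    then have keq: "k = 2 * \<mu>" using k3 by simp
    have neq: "n = 6 * \<mu> - 3" using True keq by simp
    have m2: "\<mu> \<ge> 2" using k3 keq by simp
    have hi: "(real (\<mu> * (2 * \<mu> - 4)))^2 \<le> real (\<mu> * ((2 * \<mu> - 4) + (\<mu> - 1) * (\<mu> - 2))) * real ((6 * \<mu> - 3) - 2 - (2 * (2 * \<mu>) - \<mu>))"
      using G.higman_counts[OF uv] unfolding keq neq .
    have m5: "\<mu> \<le> 5" using G.higman_arith[OF hi m2] .
    have "\<mu> = 2 \<or> \<mu> = 3 \<or> \<mu> = 4 \<or> \<mu> = 5" using m2 m5 by arith
    moreover have "\<mu> \<noteq> 4"
    proof
      assume "\<mu> = 4"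
      then show False using G.excl_21 keq neq by simp
    qed
    ultimately have rhs: "(n, k, \<mu>) \<in> {(9, 4, 2), (15, 6, 3), (27, 10, 5)}" using keq neq by auto
    have all_adj: "G.adjT t x" if t: "t \<in> G.T" and xt: "x \<notin> t" for t x
    proof -
      have "t \<union> G.Nt t = UNIV"
        using card_seteq[of UNIV "t \<union> G.Nt t"] G.cover[OF t] k3 True G.cardU by simp
      then show ?thesis using xt by (auto simp: G.Nt_def)
    qed
    have nb: "nbhd G.T C3_adj t = {r\<in>G.T. C3_adj t r}" for t by (simp add: nbhd_def)
    have "srg G.T C3_adj (card G.T) (3 * (k div 2 - 1)) (k div 2 - 2) 3"
      unfolding srg_def
    proof (intro conjI ballI impI)
      show "simple_graph G.T C3_adj" using G.finite_T by (auto simp: simple_graph_def C3_adj_def)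
      show "card G.T = card G.T" ..
      fix t assume t: "t \<in> G.T"
      show "card (nbhd G.T C3_adj t) = 3 * (k div 2 - 1)" using G.C3_deg[OF t] nb by simp
      fix s assume s: "s \<in> G.T"
      have int: "nbhd G.T C3_adj t \<inter> nbhd G.T C3_adj s = {r\<in>G.T. C3_adj t r \<and> C3_adj s r}"
        using nb by auto
      {
        assume "C3_adj t s"
        then show "card (nbhd G.T C3_adj t \<inter> nbhd G.T C3_adj s) = k div 2 - 2"
          using G.C3_lam[OF t s] int by simp
      }
      {
        assume ts: "t \<noteq> s" "\<not> C3_adj t s"
        then have d: "t \<inter> s = {}" by (simp add: C3_adj_def)
        have "{b\<in>s. G.adjT t b} = s" using all_adj[OF t] d by auto
        then show "card (nbhd G.T C3_adj t \<inter> nbhd G.T C3_adj s) = 3"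
          using G.mu3[OF t s d] int G.tri_card[OF s] by simp
      }
    qed
    then have "strongly_regular G.T C3_adj" unfolding strongly_regular_def by blast
    then show ?thesis using rhs by simp
  next
    case False
    have rhs: "(n, k, \<mu>) \<notin> {(9, 4, 2), (15, 6, 3), (27, 10, 5)}" using False by auto
    have "t0 \<union> G.Nt t0 \<noteq> UNIV"
    proof
      assume "t0 \<union> G.Nt t0 = UNIV"
      then have "card (UNIV :: 'a set) = 3 * k - 3" using G.cover[OF t0] k3 by simp
      then show False using False G.cardU by simp
    qed
    then obtain x where x: "x \<notin> t0" "\<not> G.adjT t0 x" by (auto simp: G.Nt_def)
    have "\<not> strongly_regular G.T C3_adj"
    proof
      assume "strongly_regular G.T C3_adj"
      then obtain n' k' l' m' where sr: "srg G.T C3_adj n' k' l' m'" by (auto simp: strongly_regular_def)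
      have C: "card {b\<in>s. G.adjT t0 b} = m'" if s: "s \<in> G.T" and d: "t0 \<inter> s = {}" for s
      proof -
        have "t0 \<noteq> s" using d by (auto simp: t0_def)
        moreover have "\<not> C3_adj t0 s" using d by (simp add: C3_adj_def)
        ultimately have "card (nbhd G.T C3_adj t0 \<inter> nbhd G.T C3_adj s) = m'"
          using sr t0 s unfolding srg_def by blast
        moreover have "nbhd G.T C3_adj t0 \<inter> nbhd G.T C3_adj s = {r\<in>G.T. C3_adj t0 r \<and> C3_adj s r}"
          by (auto simp: nbhd_def)
        ultimately show ?thesis using G.mu3[OF t0 s d] by simp
      qed
      have km: "k = 6 \<and> (\<mu> = 1 \<or> \<mu> = 2)" using G.far_case[OF t0 x C k3 m1] by blast
      have id: "k * (k - 2) = (n - k - 1) * \<mu>" by (rule G.srg_identity)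
      show False
      proof (cases "\<mu> = 1")
        case True
        then have "n = 31" using id km by simp
        then show False using G.excl_31 km True by simp
      next
        case F: False
        then have m2: "\<mu> = 2" using km by simp
        then have "n = 19" using id km by simp
        then show False using G.excl_19 km m2 by simp
      qed
    qed
    then show ?thesis using rhs by simp
  qed
qed

end
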